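(* For all $x\in\mathbb{C}$ and all integers $n\ge0$, \[ \sum_{k=0}^n x^k\big(L_{3k}+(2x-1)F_{3k+3}\big)=2x^{n+1}F_{3n+3} \] and \[ \sum_{k=0}^n x^k\big(5F_{3k}+(2x-1)L_{3k+3}\big)=2x^{n+1}L_{3n+3}-4. \]
   Context: $F_n,L_n$ are the Fibonacci and Lucas numbers: $F_0=0$, $F_1=1$, $L_0=2$, $L_1=1$, $W_n=W_{n-1}+W_{n-2}$. *)

theory Defs
  imports Complex_Main "HOL-Number_Theory.Fib"
begin

fun lucas :: "nat \<Rightarrow> nat" where
  "lucas 0 = 2"
| "lucas (Suc 0) = 1"
| "lucas (Suc (Suc n)) = lucas (Suc n) + lucas n"

end

theory Submission
  imports Defs
begin

lemma fl1: "fib (m+3) = lucas m + 2 * fib m"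
  by (induction m rule: lucas.induct) (auto simp: numeral_3_eq_3)

lemma fl2: "lucas (m+3) = 5 * fib m + 2 * lucas m"
  by (induction m rule: lucas.induct) (auto simp: numeral_3_eq_3)

theorem corollary4:
  fixes x :: complex and n :: nat
  shows "(\<Sum>k=0..n. x ^ k * (of_nat (lucas (3*k)) + (2*x - 1) * of_nat (fib (3*k+3))))
           = 2 * x ^ (n+1) * of_nat (fib (3*n+3))
         \<and> (\<Sum>k=0..n. x ^ k * (5 * of_nat (fib (3*k)) + (2*x - 1) * of_nat (lucas (3*k+3))))
           = 2 * x ^ (n+1) * of_nat (lucas (3*n+3)) - 4"
proof (induction n)
  case 0
  have "fib 3 = 2" "lucas 3 = 4" by (simp_all add: numeral_3_eq_3)
  then show ?case by (simp add: algebra_simps)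
next
  case (Suc n)
  have a: "(of_nat (fib (6 + n*3))::complex) = of_nat (lucas (3+n*3)) + 2 * of_nat (fib (3+n*3))"
    using fl1[of "3+n*3"] by (simp add: add.commute)
  have b: "(of_nat (lucas (6 + n*3))::complex) = 5 * of_nat (fib (3+n*3)) + 2 * of_nat (lucas (3+n*3))"
    using fl2[of "3+n*3"] by (simp add: add.commute)
  show ?case using Suc.IH
    by (simp add: sum.atLeast0_atMost_Suc algebra_simps a b)
qed

end
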